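(* The unique double bialgebra morphism from $\mathcal{T}op$ to $\mathcal{C}omp$ is given by the following: for any quasi-poset $T$, \[\phi(T)=\sum_{f\in L(T)} (f^{-1}(1),\ldots,f^{-1}(\max(f))).\]
   Context: $\mathcal{T}op[A]$ is the vector space generated by finite topologies on $A$, identified with quasi-posets $(A,\le_T)$ (open sets are upward-closed sets); $a\sim_T b$ means $a\le_T b$ and $b\le_T a$. It is a double twisted bialgebra: product disjoint union; $\Delta_{A,B}(T)=T_{\mid A}\otimes T_{\mid B}$ if $B$ is open in $T$, $0$ otherwise; $\delta_A(T)=\sum_{\sim\in\mathrm{CE}(T)}T/\sim\otimes T|\sim$ (sum over $T$-compatible equivalences: classes $T$-connected and $\sim_{T/\sim}=\sim$, where $T|\sim$ keeps the relations $x\le_T y$ with $x\sim y$ and $T/\sim$ is the transitive closure of $\le_T$ and $\sim$), whose counit is $\varepsilon'_{\mathcal{T}op}(T)=1$ if $\le_T$ is an equivalence and $0$ otherwise. The morphism $\phi$ is equivalently the unique twisted bialgebra morphism $\mathcal{T}op\to\mathcal{C}omp$ with $\varepsilon'\circ\phi=\varepsilon'_{\mathcal{T}op}$. $\mathcal{C}omp[A]$ has basis the set compositions $(A_1,\ldots,A_k)$ of $A$, with quasi-shuffle product $\uplus$, deconcatenation coproduct $\Delta$, a second coproduct $\delta$, and $\varepsilon'(A_1,\ldots,A_k)=\delta_{k,1}$. $L(T)$ is the set of surjections $f:A\to\{1,\ldots,\max(f)\}$ such that $a\le_T b$ implies $f(a)\le f(b)$, and $a\le_T b$ with $f(a)=f(b)$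 implies $a\sim_T b$. *)

theory Defs
  imports Main
begin

(* Quasi-posets (finite topologies) on A, as relations (a,b) \<in> T meaning a \<le>_T b *)
definition quasi_order :: "'a set \<Rightarrow> ('a \<times> 'a) set \<Rightarrow> bool" where
  "quasi_order A T \<longleftrightarrow> T \<subseteq> A \<times> A \<and> (\<forall>x\<in>A. (x, x) \<in> T) \<and> trans T"

definition open_qo :: "('a \<times> 'a) set \<Rightarrow> 'a set \<Rightarrow> bool" where
  "open_qo T B \<longleftrightarrow> (\<forall>x y. x \<in> B \<and> (x, y) \<in> T \<longrightarrow> y \<in> B)"

definition restr_qo :: "('a \<times> 'a) set \<Rightarrow> 'a set \<Rightarrow> ('a \<times> 'a) set" where
  "restr_qo T A = T \<inter> (A \<times> A)"

definition is_comp :: "'a set \<Rightarrow> 'a set list \<Rightarrow> bool" where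
  "is_comp A c \<longleftrightarrow> (\<forall>X\<in>set c. X \<noteq> {}) \<and> \<Union>(set c) = A \<and>
     (\<forall>i j. i < length c \<and> j < length c \<and> i \<noteq> j \<longrightarrow> c ! i \<inter> c ! j = {})"

(* elements of Comp[A] are represented by their coefficient functions on set compositions *)

definition restr_comp :: "'a set \<Rightarrow> 'a set list \<Rightarrow> 'a set list" where
  "restr_comp A c = filter (\<lambda>X. X \<noteq> {}) (map (\<lambda>X. X \<inter> A) c)"

(* quasi-shuffle product Comp[A] x Comp[B] \<rightarrow> Comp[A \<union> B] (A, B disjoint):
   the quasi-shuffles of (a, b) are exactly the compositions C of A \<union> B with
   restr_comp A C = a and restr_comp B C = b, each with coefficient 1 *)
definition qsh :: "'a set \<Rightarrow> 'a set \<Rightarrow> ('a set list \<Rightarrow> 'k::field) \<Rightarrow> ('a set list \<Rightarrow> 'k)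
     \<Rightarrow> 'a set list \<Rightarrow> 'k" where
  "qsh A B u v C = (if is_comp (A \<union> B) C then u (restr_comp A C) * v (restr_comp B C) else 0)"

(* counit epsilon' of Comp: 1 on compositions with exactly one block
   (and, on Comp[{}], on the empty composition = unit) *)
definition eps'_comp :: "'a set list \<Rightarrow> 'k::field" where
  "eps'_comp c = (if length c \<le> 1 then 1 else 0)"

definition eps'_top :: "('a \<times> 'a) set \<Rightarrow> 'k::field" where
  "eps'_top T = (if (\<forall>x y. (x, y) \<in> T \<longrightarrow> (y, x) \<in> T) then 1 else 0)"

(* A family of linear maps psi_A : Top[A] \<rightarrow> Comp[A], given on the basis:
   psi A T is the element of Comp[A] (coefficient function) image of T.
   Twisted bialgebra morphism Top \<rightarrow> Comp with eps' \<circ> psi = eps'_Top. *)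
definition tb_morphism_eps :: "('a set \<Rightarrow> ('a \<times> 'a) set \<Rightarrow> 'a set list \<Rightarrow> 'k::field) \<Rightarrow> bool" where
  "tb_morphism_eps \<psi> \<longleftrightarrow>
     \<comment> \<open>values lie in Comp[A]\<close>
     (\<forall>A T c. finite A \<and> quasi_order A T \<and> \<not> is_comp A c \<longrightarrow> \<psi> A T c = 0) \<and>
     \<comment> \<open>species morphism: compatible with relabelling by bijections\<close>
     (\<forall>(\<sigma>::'a \<Rightarrow> 'a) A T c. finite A \<and> quasi_order A T \<and> inj_on \<sigma> A \<and> is_comp A c \<longrightarrow>
        \<psi> (\<sigma> ` A) ((\<lambda>(x, y). (\<sigma> x, \<sigma> y)) ` T) (map ((`) \<sigma>) c) = \<psi> A T c) \<and>
     \<comment> \<open>unit\<close>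
     (\<psi> {} {} = (\<lambda>c. if c = [] then 1 else 0)) \<and>
     \<comment> \<open>product\<close>
     (\<forall>A B T T'. finite A \<and> finite B \<and> A \<inter> B = {} \<and> quasi_order A T \<and> quasi_order B T' \<longrightarrow>
        \<psi> (A \<union> B) (T \<union> T') = qsh A B (\<psi> A T) (\<psi> B T')) \<and>
     \<comment> \<open>coproduct: Delta_{A,B} \<circ> psi = (psi_A \<otimes> psi_B) \<circ> Delta_{A,B}\<close>
     (\<forall>A B T c1 c2. finite A \<and> finite B \<and> A \<inter> B = {} \<and> quasi_order (A \<union> B) T \<and>
        is_comp A c1 \<and> is_comp B c2 \<longrightarrow>
        \<psi> (A \<union> B) T (c1 @ c2) =
          (if open_qo T B then \<psi> A (restr_qo T A) c1 * \<psi> B (restr_qo T B) c2 else 0)) \<and>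
     \<comment> \<open>eps' \<circ> psi = eps'_Top\<close>
     (\<forall>A T. finite A \<and> quasi_order A T \<longrightarrow>
        (\<Sum>c\<in>{c. is_comp A c}. \<psi> A T c * eps'_comp c) = eps'_top T)"

definition Lset :: "'a set \<Rightarrow> ('a \<times> 'a) set \<Rightarrow> ('a \<Rightarrow> nat) set" where
  "Lset A T = {f. (\<forall>x. x \<notin> A \<longrightarrow> f x = 0) \<and> (\<exists>m. f ` A = {1..m}) \<and>
      (\<forall>a b. (a, b) \<in> T \<longrightarrow> f a \<le> f b) \<and>
      (\<forall>a b. (a, b) \<in> T \<and> f a = f b \<longrightarrow> (b, a) \<in> T)}"

(* (f^{-1}(1), ..., f^{-1}(max f)) ; max f = card (f ` A) since f ` A = {1..max f} *)
definition comp_of :: "'a set \<Rightarrow> ('a \<Rightarrow> nat) \<Rightarrow> 'a set list" where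
  "comp_of A f = map (\<lambda>i. {x\<in>A. f x = i}) [1..<card (f ` A) + 1]"

definition phi :: "'a set \<Rightarrow> ('a \<times> 'a) set \<Rightarrow> 'a set list \<Rightarrow> 'k::field" where
  "phi A T c = of_nat (card {f \<in> Lset A T. comp_of A f = c})"

end

theory Submission
  imports Defs
begin

lemma is_comp_Nil[simp]: "is_comp A [] \<longleftrightarrow> A = {}"
  by (auto simp: is_comp_def)

lemma is_comp_Cons: "is_comp A (X # cs) \<longleftrightarrow>
   X \<noteq> {} \<and> X \<inter> \<Union>(set cs) = {} \<and> A = X \<union> \<Union>(set cs) \<and> is_comp (\<Union>(set cs)) cs"
proof
  assume h: "is_comp A (X # cs)"
  have d: "\<And>i j. i < Suc (length cs) \<Longrightarrow> j < Suc (length cs) \<Longrightarrow> i \<noteq> j \<Longrightarrow> (X#cs)!i \<inter> (X#cs)!j = {}"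
    using h by (auto simp: is_comp_def)
  have "X \<inter> \<Union>(set cs) = {}"
  proof (rule ccontr)
    assume "X \<inter> \<Union>(set cs) \<noteq> {}"
    then obtain Y where "Y \<in> set cs" "X \<inter> Y \<noteq> {}" by blast
    then obtain k where "k < length cs" "X \<inter> cs!k \<noteq> {}" by (metis in_set_conv_nth)
    with d[of 0 "Suc k"] show False by auto
  qed
  moreover have "\<forall>i j. i < length cs \<and> j < length cs \<and> i \<noteq> j \<longrightarrow> cs ! i \<inter> cs ! j = {}"
    using d by (metis Suc_less_eq nat.inject nth_Cons_Suc)
  ultimately show "X \<noteq> {} \<and> X \<inter> \<Union>(set cs) = {} \<and> A = X \<union> \<Union>(set cs) \<and> is_comp (\<Union>(set cs)) cs"
    using h by (auto simp: is_comp_def)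
next
  assume h: "X \<noteq> {} \<and> X \<inter> \<Union>(set cs) = {} \<and> A = X \<union> \<Union>(set cs) \<and> is_comp (\<Union>(set cs)) cs"
  have "(X#cs)!i \<inter> (X#cs)!j = {}" if "i < Suc (length cs)" "j < Suc (length cs)" "i \<noteq> j" for i j
  proof (cases i)
    case 0
    have "j \<noteq> 0" using that 0 by simp
    then obtain k where "j = Suc k" by (cases j) auto
    then have "k < length cs" using that by simp
    then have "cs!k \<in> set cs" by (rule nth_mem)
    then show ?thesis using h 0 by (auto simp: \<open>j = Suc k\<close>)
  next
    case (Suc i')
    show ?thesis
    proof (cases j)
      case 0
      have "i' < length cs" using that Suc by simp
      then have "cs!i' \<in> set cs" by (rule nth_mem)
      then show ?thesis using h Suc \<open>j = 0\<close> by auto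
    next
      case (Suc j')
      then show ?thesis using h \<open>i = Suc i'\<close> that by (auto simp: is_comp_def)
    qed
  qed
  then show "is_comp A (X # cs)" using h by (auto simp: is_comp_def)
qed

lemma is_comp_Union: "is_comp A c \<Longrightarrow> \<Union>(set c) = A"
  by (auto simp: is_comp_def)

lemma is_comp_append: "is_comp A (u @ v) \<longleftrightarrow>
   is_comp (\<Union>(set u)) u \<and> is_comp (\<Union>(set v)) v \<and> \<Union>(set u) \<inter> \<Union>(set v) = {} \<and> A = \<Union>(set u) \<union> \<Union>(set v)"
proof (induction u arbitrary: A)
  case Nil
  then show ?case by (metis Sup_empty Un_empty_left append_Nil empty_set inf_bot_left is_comp_Nil is_comp_Union)
next
  case (Cons X u)
  show ?case
    unfolding append_Cons is_comp_Cons Cons.IH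
    by (auto simp: is_comp_Union)
qed

lemma is_comp_distinct: "is_comp A c \<Longrightarrow> distinct c"
proof -
  assume h: "is_comp A c"
  show ?thesis unfolding distinct_conv_nth
  proof (intro allI impI)
    fix i j assume ij: "i < length c" "j < length c" "i \<noteq> j"
    then have "c!i \<inter> c!j = {}" "c!i \<noteq> {}" using h nth_mem[of i c] by (auto simp: is_comp_def)
    then show "c!i \<noteq> c!j" by auto
  qed
qed

lemma finite_comps: "finite A \<Longrightarrow> finite {c. is_comp A c}"
proof -
  assume f: "finite A"
  have "{c. is_comp A c} \<subseteq> {xs. set xs \<subseteq> Pow A \<and> length xs \<le> card (Pow A)}"
  proof (rule subsetI, unfold mem_Collect_eq, rule conjI)
    fix c assume h: "is_comp A c"
    show "set c \<subseteq> Pow A" using is_comp_Union[OF h] by auto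
  next
    fix c assume h: "is_comp A c"
    have "set c \<subseteq> Pow A" using is_comp_Union[OF h] by auto
    then have "card (set c) \<le> card (Pow A)" using f by (simp add: card_mono)
    then show "length c \<le> card (Pow A)" using distinct_card[OF is_comp_distinct[OF h]] by simp
  qed
  moreover have "finite {xs. set xs \<subseteq> Pow A \<and> length xs \<le> card (Pow A)}"
    using f by (intro finite_lists_length_le) auto
  ultimately show ?thesis by (rule finite_subset)
qed

lemma is_comp_idx_unique: "is_comp A c \<Longrightarrow> i < length c \<Longrightarrow> j < length c \<Longrightarrow> x \<in> c!i \<Longrightarrow> x \<in> c!j \<Longrightarrow> i = j"
  unfolding is_comp_def by blast

lemma is_comp_idx_ex: "is_comp A c \<Longrightarrow> x \<in> A \<Longrightarrow> \<exists>i<length c. x \<in> c!i"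
  using is_comp_Union[of A c] by (auto simp: in_set_conv_nth)

definition idx :: "'a set list \<Rightarrow> 'a \<Rightarrow> nat" where
  "idx c x = (THE i. i < length c \<and> x \<in> c!i)"

lemma idx_eq: "is_comp A c \<Longrightarrow> i < length c \<Longrightarrow> x \<in> c!i \<Longrightarrow> idx c x = i"
  unfolding idx_def by (rule the_equality) (auto dest: is_comp_idx_unique)

lemma idx: "is_comp A c \<Longrightarrow> x \<in> A \<Longrightarrow> idx c x < length c \<and> x \<in> c!(idx c x)"
  using is_comp_idx_ex[of A c x] idx_eq[of A c] by metis

definition fc :: "'a set \<Rightarrow> 'a set list \<Rightarrow> 'a \<Rightarrow> nat" where
  "fc A c x = (if x \<in> A then Suc (idx c x) else 0)"

definition IC :: "('a \<times> 'a) set \<Rightarrow> 'a set list \<Rightarrow> bool" where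
  "IC T c \<longleftrightarrow> (\<forall>i j x y. i < length c \<longrightarrow> j < length c \<longrightarrow> x \<in> c!i \<longrightarrow> y \<in> c!j \<longrightarrow> (x, y) \<in> T
      \<longrightarrow> i < j \<or> (i = j \<and> (y, x) \<in> T))"

lemma Lset_card: "f \<in> Lset A T \<Longrightarrow> f ` A = {1..card (f ` A)}"
proof -
  assume "f \<in> Lset A T"
  then obtain m where "f ` A = {1..m}" unfolding Lset_def by blast
  then show ?thesis by simp
qed

lemma comp_of_len: "f \<in> Lset A T \<Longrightarrow> length (comp_of A f) = card (f ` A)"
  unfolding comp_of_def by simp

lemma comp_of_nth: "i < length (comp_of A f) \<Longrightarrow> comp_of A f ! i = {x\<in>A. f x = Suc i}"
  unfolding comp_of_def by (simp del: upt_Suc)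

lemma Lset_comp: assumes f: "f \<in> Lset A T"
  shows "is_comp A (comp_of A f) \<and> IC T (comp_of A f)"
proof -
  let ?c = "comp_of A f"
  let ?m = "card (f ` A)"
  have fA: "f ` A = {1..?m}" using Lset_card[OF f] .
  have len: "length ?c = ?m" using comp_of_len[OF f] .
  have ne: "\<forall>X\<in>set ?c. X \<noteq> {}"
  proof
    fix X assume "X \<in> set ?c"
    then obtain i where i: "i < length ?c" "X = ?c ! i" by (auto simp: in_set_conv_nth)
    then have "Suc i \<in> f ` A" using fA len by auto
    then show "X \<noteq> {}" using i comp_of_nth[of i A f] by auto
  qed
  have un: "\<Union>(set ?c) = A"
  proof
    show "\<Union>(set ?c) \<subseteq> A" by (auto simp: in_set_conv_nth comp_of_nth)
    show "A \<subseteq> \<Union>(set ?c)"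
    proof
      fix x assume x: "x \<in> A"
      then have "f x \<in> {1..?m}" using fA by blast
      then have i: "f x - 1 < length ?c" "f x = Suc (f x - 1)" using len by auto
      then have "x \<in> ?c ! (f x - 1)" using comp_of_nth[of "f x - 1" A f] x by auto
      then show "x \<in> \<Union>(set ?c)" using i nth_mem by blast
    qed
  qed
  have "is_comp A ?c" unfolding is_comp_def using ne un by (auto simp: comp_of_nth)
  moreover have "IC T ?c" unfolding IC_def
  proof (intro allI impI)
    fix i j x y assume h: "i < length ?c" "j < length ?c" "x \<in> ?c!i" "y \<in> ?c!j" "(x, y) \<in> T"
    then have "f x = Suc i" "f y = Suc j" by (auto simp: comp_of_nth)
    then show "i < j \<or> (i = j \<and> (y, x) \<in> T)" using f h(5) unfolding Lset_def by force
  qed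
  ultimately show ?thesis by blast
qed

lemma Lset_fc: assumes f: "f \<in> Lset A T" shows "f = fc A (comp_of A f)"
proof
  fix x
  have c: "is_comp A (comp_of A f)" using Lset_comp[OF f] by blast
  show "f x = fc A (comp_of A f) x"
  proof (cases "x \<in> A")
    case True
    have fA: "f ` A = {1..card (f ` A)}" using Lset_card[OF f] .
    then have "f x \<in> {1..card (f ` A)}" using True by blast
    then have i: "f x - 1 < length (comp_of A f)" "f x = Suc (f x - 1)" using comp_of_len[OF f] by auto
    then have "x \<in> comp_of A f ! (f x - 1)" using comp_of_nth[of "f x - 1" A f] True by auto
    then have "idx (comp_of A f) x = f x - 1" using idx_eq[OF c i(1)] by blast
    then show ?thesis using True i(2) by (simp add: fc_def)
  next
    case False
    then show ?thesis using f by (simp add: fc_def Lset_def)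
  qed
qed

lemma fc_Lset: assumes c: "is_comp A c" and ic: "IC T c" and q: "quasi_order A T"
  shows "fc A c \<in> Lset A T \<and> comp_of A (fc A c) = c"
proof -
  let ?f = "fc A c"
  have img: "?f ` A = {1..length c}"
  proof
    show "?f ` A \<subseteq> {1..length c}" using idx[OF c] by (auto simp: fc_def Suc_le_eq)
    show "{1..length c} \<subseteq> ?f ` A"
    proof
      fix k assume k: "k \<in> {1..length c}"
      then have "k - 1 < length c" by auto
      then have m: "c!(k-1) \<in> set c" by (rule nth_mem)
      then obtain x where x: "x \<in> c!(k-1)" using c unfolding is_comp_def by blast
      then have xA: "x \<in> A" using m is_comp_Union[OF c] by blast
      have "idx c x = k - 1" using idx_eq[OF c \<open>k - 1 < length c\<close> x] .
      then have "?f x = k" using xA k by (simp add: fc_def)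
      then show "k \<in> ?f ` A" using xA by blast
    qed
  qed
  have TA: "T \<subseteq> A \<times> A" using q unfolding quasi_order_def by blast
  have mono: "?f a \<le> ?f b \<and> (?f a = ?f b \<longrightarrow> (b, a) \<in> T)" if ab: "(a, b) \<in> T" for a b
  proof -
    have a: "a \<in> A" and b: "b \<in> A" using ab TA by auto
    have "idx c a < idx c b \<or> (idx c a = idx c b \<and> (b, a) \<in> T)"
      using ic idx[OF c a] idx[OF c b] ab unfolding IC_def by blast
    then show ?thesis using a b by (auto simp: fc_def)
  qed
  have "?f \<in> Lset A T" unfolding Lset_def using img mono by (auto simp: fc_def)
  moreover have "comp_of A ?f = c"
  proof (rule nth_equalityI)
    have "card (?f ` A) = length c" using img by simp
    then show len: "length (comp_of A ?f) = length c" by (simp add: comp_of_def del: upt_Suc)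
    fix i assume i: "i < length (comp_of A ?f)"
    then have i': "i < length c" using len by simp
    have "comp_of A ?f ! i = {x\<in>A. ?f x = Suc i}" using comp_of_nth[OF i] .
    also have "\<dots> = c!i"
    proof
      show "{x\<in>A. ?f x = Suc i} \<subseteq> c!i" using idx[OF c] by (auto simp: fc_def)
      show "c!i \<subseteq> {x\<in>A. ?f x = Suc i}"
      proof
        fix x assume x: "x \<in> c!i"
        then have "x \<in> A" using nth_mem[OF i'] is_comp_Union[OF c] by blast
        then show "x \<in> {x\<in>A. ?f x = Suc i}" using idx_eq[OF c i' x] by (simp add: fc_def)
      qed
    qed
    finally show "comp_of A ?f ! i = c ! i" .
  qed
  ultimately show ?thesis by blast
qed

lemma phi_IC: assumes q: "quasi_order A T"
  shows "phi A T c = (if is_comp A c \<and> IC T c then 1 else 0)"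
proof -
  have "{f \<in> Lset A T. comp_of A f = c} = (if is_comp A c \<and> IC T c then {fc A c} else {})"
  proof (cases "is_comp A c \<and> IC T c")
    case True
    then show ?thesis using fc_Lset[OF _ _ q, of c] Lset_fc by auto
  next
    case False
    then show ?thesis using Lset_comp by auto
  qed
  then show ?thesis unfolding phi_def by simp
qed

definition symX :: "('a \<times> 'a) set \<Rightarrow> 'a set \<Rightarrow> bool" where
  "symX T X \<longleftrightarrow> (\<forall>x\<in>X. \<forall>y\<in>X. (x, y) \<in> T \<longrightarrow> (y, x) \<in> T)"

fun ok :: "('a \<times> 'a) set \<Rightarrow> 'a set list \<Rightarrow> bool" where
  "ok T [] = True"
| "ok T (X # cs) = (open_qo T (X \<union> \<Union>(set cs)) \<and> symX T X \<and> ok T cs)"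

lemma open_empty[simp]: "open_qo T {}"
  by (simp add: open_qo_def)

lemma ok_open: "ok T c \<Longrightarrow> open_qo T (\<Union>(set c))"
  by (cases c) auto

lemma ok_iff_IC: "is_comp A c \<Longrightarrow> ok T c \<longleftrightarrow> IC T c \<and> open_qo T (\<Union>(set c))"
proof (induction c arbitrary: A)
  case Nil
  then show ?case by (simp add: IC_def)
next
  case (Cons X cs)
  let ?B = "\<Union>(set cs)"
  have h: "X \<noteq> {}" "X \<inter> ?B = {}" "is_comp ?B cs" using Cons.prems by (auto simp: is_comp_Cons)
  have IH: "ok T cs \<longleftrightarrow> IC T cs \<and> open_qo T ?B" using Cons.IH[OF h(3)] .
  have ICc: "IC T (X # cs) \<longleftrightarrow> symX T X \<and> IC T cs \<and> (\<forall>k x y. k < length cs \<longrightarrow> x \<in> cs!k \<longrightarrow> y \<in> X \<longrightarrow> (x, y) \<notin> T)"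
  proof
    assume ic: "IC T (X # cs)"
    have "symX T X" unfolding symX_def using ic[unfolded IC_def, rule_format, of 0 0] by auto
    moreover have "IC T cs" unfolding IC_def
    proof (intro allI impI)
      fix i j x y assume "i < length cs" "j < length cs" "x \<in> cs!i" "y \<in> cs!j" "(x, y) \<in> T"
      then show "i < j \<or> i = j \<and> (y, x) \<in> T" using ic[unfolded IC_def, rule_format, of "Suc i" "Suc j" x y] by auto
    qed
    moreover have "\<forall>k x y. k < length cs \<longrightarrow> x \<in> cs!k \<longrightarrow> y \<in> X \<longrightarrow> (x, y) \<notin> T"
    proof (intro allI impI notI)
      fix k x y assume "k < length cs" "x \<in> cs!k" "y \<in> X" "(x, y) \<in> T"
      then show False using ic[unfolded IC_def, rule_format, of "Suc k" 0 x y] by simp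
    qed
    ultimately show "symX T X \<and> IC T cs \<and> (\<forall>k x y. k < length cs \<longrightarrow> x \<in> cs!k \<longrightarrow> y \<in> X \<longrightarrow> (x, y) \<notin> T)"
      by blast
  next
    assume a: "symX T X \<and> IC T cs \<and> (\<forall>k x y. k < length cs \<longrightarrow> x \<in> cs!k \<longrightarrow> y \<in> X \<longrightarrow> (x, y) \<notin> T)"
    show "IC T (X # cs)" unfolding IC_def
    proof (intro allI impI)
      fix i j x y assume ij: "i < length (X # cs)" "j < length (X # cs)" "x \<in> (X # cs)!i" "y \<in> (X # cs)!j" "(x, y) \<in> T"
      show "i < j \<or> i = j \<and> (y, x) \<in> T"
      proof (cases i)
        case 0
        show ?thesis
        proof (cases j)
          case 0
          have "x \<in> X" "y \<in> X" using ij \<open>i = 0\<close> 0 by simp_all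
          then have "(y, x) \<in> T" using a ij(5) unfolding symX_def by blast
          then show ?thesis using \<open>i = 0\<close> 0 by simp
        qed (simp add: \<open>i = 0\<close>)
      next
        case (Suc i')
        show ?thesis
        proof (cases j)
          case 0
          have "i' < length cs" "x \<in> cs!i'" "y \<in> X" using ij Suc 0 by auto
          then have "(x, y) \<notin> T" using a by blast
          then show ?thesis using ij(5) by blast
        next
          case (Suc j')
          have "i' < length cs" "x \<in> cs!i'" "j' < length cs" "y \<in> cs!j'" using ij Suc \<open>i = Suc i'\<close> by auto
          then have "i' < j' \<or> i' = j' \<and> (y, x) \<in> T" using a ij(5) unfolding IC_def by blast
          then show ?thesis using Suc \<open>i = Suc i'\<close> by auto
        qed
      qed
    qed
  qed
  have cross: "open_qo T (X \<union> ?B) \<Longrightarrow> open_qo T ?B \<longleftrightarrow> (\<forall>k x y. k < length cs \<longrightarrow> x \<in> cs!k \<longrightarrow> y \<in> X \<longrightarrow> (x, y) \<notin> T)"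
  proof
    assume "open_qo T ?B"
    then show "\<forall>k x y. k < length cs \<longrightarrow> x \<in> cs!k \<longrightarrow> y \<in> X \<longrightarrow> (x, y) \<notin> T"
    proof (intro allI impI notI)
      fix k x y assume k: "k < length cs" "x \<in> cs!k" "y \<in> X" "(x, y) \<in> T"
      have "cs!k \<in> set cs" using k(1) by (rule nth_mem)
      then have "y \<in> ?B" using k \<open>open_qo T ?B\<close> unfolding open_qo_def by blast
      then show False using h(2) k(3) by blast
    qed
  next
    assume o: "open_qo T (X \<union> ?B)" and n: "\<forall>k x y. k < length cs \<longrightarrow> x \<in> cs!k \<longrightarrow> y \<in> X \<longrightarrow> (x, y) \<notin> T"
    show "open_qo T ?B" unfolding open_qo_def
    proof (intro allI impI)
      fix x y assume xy: "x \<in> ?B \<and> (x, y) \<in> T"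
      then obtain k where "k < length cs" "x \<in> cs!k" by (auto simp: in_set_conv_nth)
      then have "y \<notin> X" using n xy by blast
      moreover have "y \<in> X \<union> ?B" using o xy unfolding open_qo_def by blast
      ultimately show "y \<in> ?B" by blast
    qed
  qed
  show ?case
  proof
    assume "ok T (X # cs)"
    then show "IC T (X # cs) \<and> open_qo T (\<Union> (set (X # cs)))" using IH ICc cross by simp
  next
    assume "IC T (X # cs) \<and> open_qo T (\<Union> (set (X # cs)))"
    then show "ok T (X # cs)" using IH ICc cross by simp
  qed
qed

lemma open_whole: "T \<subseteq> A \<times> A \<Longrightarrow> open_qo T A"
  unfolding open_qo_def by blast

lemma qo_sub: "quasi_order A T \<Longrightarrow> T \<subseteq> A \<times> A"
  unfolding quasi_order_def by blast

lemma phi_char: assumes q: "quasi_order A T"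
  shows "phi A T c = (if is_comp A c \<and> ok T c then 1 else 0)"
proof -
  have "is_comp A c \<Longrightarrow> ok T c \<longleftrightarrow> IC T c"
    using ok_iff_IC[of A c T] is_comp_Union[of A c] open_whole[OF qo_sub[OF q]] by auto
  then show ?thesis using phi_IC[OF q, of c] by auto
qed

lemma imT_mem: "inj_on \<sigma> A \<Longrightarrow> T \<subseteq> A \<times> A \<Longrightarrow> a \<in> A \<Longrightarrow> b \<in> A \<Longrightarrow>
  (\<sigma> a, \<sigma> b) \<in> (\<lambda>(x, y). (\<sigma> x, \<sigma> y)) ` T \<longleftrightarrow> (a, b) \<in> T"
proof
  assume i: "inj_on \<sigma> A" and t: "T \<subseteq> A \<times> A" and a: "a \<in> A" and b: "b \<in> A"
    and m: "(\<sigma> a, \<sigma> b) \<in> (\<lambda>(x, y). (\<sigma> x, \<sigma> y)) ` T"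
  then obtain a' b' where ab: "(a', b') \<in> T" "\<sigma> a = \<sigma> a'" "\<sigma> b = \<sigma> b'" by auto
  then have "a' \<in> A" "b' \<in> A" using t by auto
  then have "a = a'" "b = b'" using ab i a b unfolding inj_on_def by auto
  then show "(a, b) \<in> T" using ab by simp
qed auto

lemma imT_cases: "(u, w) \<in> (\<lambda>(x, y). (\<sigma> x, \<sigma> y)) ` T \<Longrightarrow> (\<And>a b. (a, b) \<in> T \<Longrightarrow> u = \<sigma> a \<Longrightarrow> w = \<sigma> b \<Longrightarrow> P) \<Longrightarrow> P"
  by auto

lemma qo_image: assumes i: "inj_on \<sigma> A" and q: "quasi_order A T"
  shows "quasi_order (\<sigma> ` A) ((\<lambda>(x, y). (\<sigma> x, \<sigma> y)) ` T)"
proof -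
  have t: "T \<subseteq> A \<times> A" using qo_sub[OF q] .
  have "trans ((\<lambda>(x, y). (\<sigma> x, \<sigma> y)) ` T)"
  proof (rule transI)
    fix u v w assume 1: "(u, v) \<in> (\<lambda>(x, y). (\<sigma> x, \<sigma> y)) ` T" and 2: "(v, w) \<in> (\<lambda>(x, y). (\<sigma> x, \<sigma> y)) ` T"
    obtain a b where ab: "(a, b) \<in> T" "u = \<sigma> a" "v = \<sigma> b" using 1 by auto
    obtain b' c where bc: "(b', c) \<in> T" "v = \<sigma> b'" "w = \<sigma> c" using 2 by auto
    have "b = b'" using ab bc t i unfolding inj_on_def by blast
    then have "(a, c) \<in> T" using ab bc q unfolding quasi_order_def trans_def by blast
    then show "(u, w) \<in> (\<lambda>(x, y). (\<sigma> x, \<sigma> y)) ` T" using ab bc by auto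
  qed
  then show ?thesis using q unfolding quasi_order_def by auto
qed

lemma is_comp_image: assumes i: "inj_on \<sigma> A" and c: "is_comp A c"
  shows "is_comp (\<sigma> ` A) (map ((`) \<sigma>) c)"
proof -
  have sub: "\<And>i. i < length c \<Longrightarrow> c!i \<subseteq> A" using c nth_mem unfolding is_comp_def by blast
  have "\<sigma> ` (c!i) \<inter> \<sigma> ` (c!j) = {}" if "i < length c" "j < length c" "i \<noteq> j" for i j
  proof -
    have "\<sigma> ` (c!i \<inter> c!j) = \<sigma> ` (c!i) \<inter> \<sigma> ` (c!j)"
      using inj_on_image_Int[OF i sub[OF that(1)] sub[OF that(2)]] .
    then show ?thesis using c that unfolding is_comp_def by auto
  qed
  then show ?thesis using c unfolding is_comp_def by (auto simp: image_Union)
qed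

lemma ok_image: assumes i: "inj_on \<sigma> A" and t: "T \<subseteq> A \<times> A"
  shows "\<Union>(set c) \<subseteq> A \<Longrightarrow> ok ((\<lambda>(x, y). (\<sigma> x, \<sigma> y)) ` T) (map ((`) \<sigma>) c) \<longleftrightarrow> ok T c"
proof (induction c)
  case Nil
  then show ?case by simp
next
  case (Cons X cs)
  let ?T = "(\<lambda>(x, y). (\<sigma> x, \<sigma> y)) ` T"
  have opn: "open_qo ?T (\<sigma> ` V) \<longleftrightarrow> open_qo T V" if V: "V \<subseteq> A" for V
  proof
    assume o: "open_qo ?T (\<sigma> ` V)"
    show "open_qo T V" unfolding open_qo_def
    proof (intro allI impI)
      fix x y assume xy: "x \<in> V \<and> (x, y) \<in> T"
      then have "(\<sigma> x, \<sigma> y) \<in> ?T" by auto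
      then have "\<sigma> y \<in> \<sigma> ` V" using o xy unfolding open_qo_def by blast
      then obtain v where "v \<in> V" "\<sigma> y = \<sigma> v" by auto
      moreover have "y \<in> A" using xy t by auto
      ultimately show "y \<in> V" using V i unfolding inj_on_def by auto
    qed
  next
    assume o: "open_qo T V"
    show "open_qo ?T (\<sigma> ` V)" unfolding open_qo_def
    proof (intro allI impI)
      fix u w assume uw: "u \<in> \<sigma> ` V \<and> (u, w) \<in> ?T"
      then obtain x where x: "x \<in> V" "u = \<sigma> x" by auto
      obtain a b where ab: "(a, b) \<in> T" "u = \<sigma> a" "w = \<sigma> b" using uw by auto
      have "a = x" using ab x t V i unfolding inj_on_def by blast
      then have "b \<in> V" using o ab x unfolding open_qo_def by blast
      then show "w \<in> \<sigma> ` V" using ab by auto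
    qed
  qed
  have sy: "symX ?T (\<sigma> ` X) \<longleftrightarrow> symX T X" if X: "X \<subseteq> A"
  proof
    assume s: "symX ?T (\<sigma> ` X)"
    show "symX T X" unfolding symX_def
    proof (intro ballI impI)
      fix x y assume "x \<in> X" "y \<in> X" "(x, y) \<in> T"
      moreover have "(\<sigma> x, \<sigma> y) \<in> ?T" using \<open>(x, y) \<in> T\<close> by force
      ultimately have "(\<sigma> y, \<sigma> x) \<in> ?T" using s unfolding symX_def by blast
      then show "(y, x) \<in> T" using imT_mem[OF i t] X \<open>x \<in> X\<close> \<open>y \<in> X\<close> by blast
    qed
  next
    assume s: "symX T X"
    show "symX ?T (\<sigma> ` X)" unfolding symX_def
    proof (intro ballI impI)
      fix u w assume "u \<in> \<sigma> ` X" "w \<in> \<sigma> ` X" "(u, w) \<in> ?T"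
      then obtain x y where "x \<in> X" "y \<in> X" "u = \<sigma> x" "w = \<sigma> y" by auto
      then have "(x, y) \<in> T" using \<open>(u, w) \<in> ?T\<close> imT_mem[OF i t] X by blast
      then have "(y, x) \<in> T" using s \<open>x \<in> X\<close> \<open>y \<in> X\<close> unfolding symX_def by blast
      then show "(w, u) \<in> ?T" using \<open>u = \<sigma> x\<close> \<open>w = \<sigma> y\<close> by auto
    qed
  qed
  have XA: "X \<subseteq> A" and csA: "\<Union>(set cs) \<subseteq> A" using Cons.prems by auto
  have e: "\<sigma> ` X \<union> \<Union>(set (map ((`) \<sigma>) cs)) = \<sigma> ` (X \<union> \<Union>(set cs))" by (auto simp: image_Union)
  show ?case using opn[of "X \<union> \<Union>(set cs)"] sy[OF XA] Cons.IH[OF csA] XA csA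
    by (simp only: list.map ok.simps e) blast
qed

lemma phi_species: assumes q: "quasi_order A T" and i: "inj_on \<sigma> A" and c: "is_comp A c"
  shows "phi (\<sigma> ` A) ((\<lambda>(x, y). (\<sigma> x, \<sigma> y)) ` T) (map ((`) \<sigma>) c) = phi A T c"
  unfolding phi_char[OF qo_image[OF i q]] phi_char[OF q]
  using is_comp_image[OF i c] c ok_image[OF i qo_sub[OF q], of c] is_comp_Union[OF c] by simp

lemma restr_comp_Nil[simp]: "restr_comp A [] = []"
  by (simp add: restr_comp_def)

lemma restr_comp_Cons[simp]: "restr_comp A (X # cs) =
  (if X \<inter> A = {} then restr_comp A cs else (X \<inter> A) # restr_comp A cs)"
  by (simp add: restr_comp_def)

lemma Union_restr[simp]: "\<Union>(set (restr_comp A c)) = \<Union>(set c) \<inter> A"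
  by (induction c) auto

lemma is_comp_restr: "is_comp D c \<Longrightarrow> is_comp (D \<inter> A) (restr_comp A c)"
proof (induction c arbitrary: D)
  case Nil
  then show ?case by simp
next
  case (Cons X cs)
  have h: "X \<noteq> {}" "X \<inter> \<Union>(set cs) = {}" "D = X \<union> \<Union>(set cs)" "is_comp (\<Union>(set cs)) cs"
    using Cons.prems by (auto simp: is_comp_Cons)
  have IH: "is_comp (\<Union>(set cs) \<inter> A) (restr_comp A cs)" using Cons.IH[OF h(4)] .
  show ?case
  proof (cases "X \<inter> A = {}")
    case True
    have "D \<inter> A = \<Union>(set cs) \<inter> A" using h(3) True by auto
    then show ?thesis using True IH by simp
  next
    case False
    have "D \<inter> A = (X \<inter> A) \<union> (\<Union>(set cs) \<inter> A)" using h(3) by auto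
    then show ?thesis using False IH h(2) by (auto simp: is_comp_Cons)
  qed
qed

lemma open_Un: "T \<subseteq> A \<times> A \<Longrightarrow> T' \<subseteq> B \<times> B \<Longrightarrow>
  open_qo (T \<union> T') V \<longleftrightarrow> open_qo T (V \<inter> A) \<and> open_qo T' (V \<inter> B)"
  unfolding open_qo_def by blast

lemma symX_Un: "T \<subseteq> A \<times> A \<Longrightarrow> T' \<subseteq> B \<times> B \<Longrightarrow> A \<inter> B = {} \<Longrightarrow>
  symX (T \<union> T') X \<longleftrightarrow> symX T (X \<inter> A) \<and> symX T' (X \<inter> B)"
  unfolding symX_def by blast

lemma ok_restr_Cons: "ok T (restr_comp A (X # cs)) \<longleftrightarrow>
  open_qo T ((X \<union> \<Union>(set cs)) \<inter> A) \<and> symX T (X \<inter> A) \<and> ok T (restr_comp A cs)"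
proof (cases "X \<inter> A = {}")
  case True
  have "(X \<union> \<Union>(set cs)) \<inter> A = \<Union>(set (restr_comp A cs))" using True by auto
  moreover have "symX T (X \<inter> A)" using True by (simp add: symX_def)
  ultimately show ?thesis using True ok_open[of T "restr_comp A cs"] by auto
next
  case False
  have "(X \<union> \<Union>(set cs)) \<inter> A = (X \<inter> A) \<union> \<Union>(set (restr_comp A cs))" by auto
  then show ?thesis using False by simp
qed

lemma ok_Un: assumes "T \<subseteq> A \<times> A" "T' \<subseteq> B \<times> B" "A \<inter> B = {}"
  shows "ok (T \<union> T') c \<longleftrightarrow> ok T (restr_comp A c) \<and> ok T' (restr_comp B c)"
proof (induction c)
  case Nil
  then show ?case by simp
next
  case (Cons X cs)
  show ?case
    unfolding ok_restr_Cons ok.simps Cons.IH open_Un[OF assms(1,2)] symX_Un[OF assms] by blast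
qed

lemma qo_Un: "A \<inter> B = {} \<Longrightarrow> quasi_order A T \<Longrightarrow> quasi_order B T' \<Longrightarrow> quasi_order (A \<union> B) (T \<union> T')"
  unfolding quasi_order_def trans_def by blast

lemma phi_prod: assumes d: "A \<inter> B = {}" and q: "quasi_order A T" and q': "quasi_order B T'"
  shows "phi (A \<union> B) (T \<union> T') = (qsh A B (phi A T) (phi B T') :: 'a set list \<Rightarrow> 'k::field)"
proof
  fix C
  show "phi (A \<union> B) (T \<union> T') C = (qsh A B (phi A T) (phi B T') C :: 'k)"
  proof (cases "is_comp (A \<union> B) C")
    case True
    have cA: "is_comp A (restr_comp A C)" using is_comp_restr[OF True, of A] by (simp add: Int_absorb1)
    have cB: "is_comp B (restr_comp B C)" using is_comp_restr[OF True, of B] by (simp add: Int_absorb1)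
    show ?thesis unfolding qsh_def phi_char[OF qo_Un[OF d q q']] phi_char[OF q] phi_char[OF q']
      using True cA cB ok_Un[OF qo_sub[OF q] qo_sub[OF q'] d, of C] by simp
  next
    case False
    then show ?thesis unfolding qsh_def phi_char[OF qo_Un[OF d q q']] by simp
  qed
qed

lemma qo_restr: "quasi_order D T \<Longrightarrow> A \<subseteq> D \<Longrightarrow> quasi_order A (restr_qo T A)"
  unfolding quasi_order_def restr_qo_def trans_def by blast

lemma symX_restr: "X \<subseteq> A \<Longrightarrow> symX T X \<longleftrightarrow> symX (restr_qo T A) X"
  unfolding symX_def restr_qo_def by blast

lemma ok_restr_B: "open_qo T B \<Longrightarrow> \<Union>(set v) \<subseteq> B \<Longrightarrow> ok T v \<longleftrightarrow> ok (restr_qo T B) v"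
proof (induction v)
  case Nil
  then show ?case by simp
next
  case (Cons X cs)
  have o: "open_qo T W \<longleftrightarrow> open_qo (restr_qo T B) W" if "W \<subseteq> B" for W
    using that Cons.prems(1) unfolding open_qo_def restr_qo_def by blast
  have "X \<subseteq> B" "\<Union>(set cs) \<subseteq> B" using Cons.prems by auto
  then show ?case using Cons.IH[OF Cons.prems(1)] o[of "X \<union> \<Union>(set cs)"] symX_restr[of X B T] by simp
qed

lemma ok_restr_A: assumes oB: "open_qo T B" and t: "T \<subseteq> (A \<union> B) \<times> (A \<union> B)" and d: "A \<inter> B = {}"
    and vB: "\<Union>(set v) = B"
  shows "\<Union>(set u) \<subseteq> A \<Longrightarrow> ok T (u @ v) \<longleftrightarrow> ok (restr_qo T A) u \<and> ok T v"
proof (induction u)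
  case Nil
  then show ?case by simp
next
  case (Cons X cs)
  have o: "open_qo T (W \<union> B) \<longleftrightarrow> open_qo (restr_qo T A) W" if "W \<subseteq> A" for W
    using that oB t d unfolding open_qo_def restr_qo_def by blast
  have XA: "X \<subseteq> A" and cA: "\<Union>(set cs) \<subseteq> A" using Cons.prems by auto
  have e: "X \<union> \<Union>(set (cs @ v)) = (X \<union> \<Union>(set cs)) \<union> B" using vB by auto
  show ?case using Cons.IH[OF cA] o[of "X \<union> \<Union>(set cs)"] symX_restr[OF XA, of T] XA cA
    by (simp only: append_Cons ok.simps e) blast
qed

lemma ok_tail: "ok T (u @ v) \<Longrightarrow> ok T v"
  by (induction u) auto

lemma phi_coprod: assumes d: "A \<inter> B = {}" and q: "quasi_order (A \<union> B) T"
    and c1: "is_comp A c1" and c2: "is_comp B c2"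
  shows "(phi (A \<union> B) T (c1 @ c2) :: 'k::field) =
     (if open_qo T B then phi A (restr_qo T A) c1 * phi B (restr_qo T B) c2 else 0)"
proof -
  have qA: "quasi_order A (restr_qo T A)" and qB: "quasi_order B (restr_qo T B)" using qo_restr[OF q] by auto
  have c: "is_comp (A \<union> B) (c1 @ c2)" using c1 c2 d is_comp_Union[OF c1] is_comp_Union[OF c2]
    by (simp add: is_comp_append)
  show ?thesis
  proof (cases "open_qo T B")
    case True
    have "ok T (c1 @ c2) \<longleftrightarrow> ok (restr_qo T A) c1 \<and> ok (restr_qo T B) c2"
      using ok_restr_A[OF True qo_sub[OF q] d is_comp_Union[OF c2], of c1] is_comp_Union[OF c1]
        ok_restr_B[OF True, of c2] is_comp_Union[OF c2] by simp
    then show ?thesis unfolding phi_char[OF q] phi_char[OF qA] phi_char[OF qB] using True c c1 c2 by simp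
  next
    case False
    have "\<not> ok T (c1 @ c2)"
    proof
      assume "ok T (c1 @ c2)"
      then have "open_qo T (\<Union>(set c2))" using ok_tail ok_open by blast
      then show False using False is_comp_Union[OF c2] by simp
    qed
    then show ?thesis unfolding phi_char[OF q] using False by simp
  qed
qed

lemma is_comp_empty: "is_comp {} c \<longleftrightarrow> c = []"
  by (cases c) (auto simp: is_comp_Cons)

lemma is_comp_single: "X \<noteq> {} \<Longrightarrow> is_comp X [X]"
  by (simp add: is_comp_Cons)

lemma single_comp: "is_comp A c \<Longrightarrow> length c \<le> 1 \<Longrightarrow> A \<noteq> {} \<Longrightarrow> c = [A]"
proof (cases c)
  case (Cons Y cs)
  assume "is_comp A c" "length c \<le> 1"
  then show ?thesis using Cons by (auto simp: is_comp_Cons)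
qed auto

lemma sum_single: assumes f: "finite A" and ne: "A \<noteq> {}"
  shows "(\<Sum>c\<in>{c. is_comp A c}. g c * eps'_comp c) = (g [A] :: 'k::field)"
proof -
  have "(\<Sum>c\<in>{c. is_comp A c}. g c * eps'_comp c) = (\<Sum>c\<in>{c. is_comp A c}. if c = [A] then g c else (0::'k))"
  proof (rule sum.cong[OF refl])
    fix c assume "c \<in> {c. is_comp A c}"
    then have c: "is_comp A c" by simp
    show "g c * eps'_comp c = (if c = [A] then g c else 0)"
    proof (cases "c = [A]")
      case True
      then show ?thesis by (simp add: eps'_comp_def)
    next
      case False
      then have "\<not> length c \<le> 1" using single_comp[OF c _ ne] by blast
      then show ?thesis using False by (simp add: eps'_comp_def)
    qed
  qed
  also have "\<dots> = (if [A] \<in> {c. is_comp A c} then g [A] else 0)"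
    by (rule sum.delta[OF finite_comps[OF f]])
  also have "\<dots> = g [A]" using is_comp_single[OF ne] by simp
  finally show ?thesis .
qed

lemma sum_empty: "(\<Sum>c\<in>{c. is_comp {} c}. g c * eps'_comp c) = (g [] :: 'k::field)"
proof -
  have e: "{c. is_comp {} c} = {[]}" using is_comp_empty by auto
  show ?thesis unfolding e by (simp add: eps'_comp_def)
qed

lemma phi_eps: assumes f: "finite A" and q: "quasi_order A T"
  shows "(\<Sum>c\<in>{c. is_comp A c}. phi A T c * eps'_comp c) = (eps'_top T :: 'k::field)"
proof (cases "A = {}")
  case True
  then have "T = {}" using qo_sub[OF q] by auto
  have 1: "(\<Sum>c\<in>{c. is_comp A c}. phi A T c * eps'_comp c) = (phi A T [] :: 'k)"
    unfolding True by (rule sum_empty)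
  have 2: "(phi A T [] :: 'k) = 1" using phi_char[OF q, of "[]"] True by simp
  have 3: "(eps'_top T :: 'k) = 1" using \<open>T = {}\<close> by (simp add: eps'_top_def)
  show ?thesis using 1 2 3 by simp
next
  case False
  have "ok T [A] \<longleftrightarrow> (\<forall>x y. (x, y) \<in> T \<longrightarrow> (y, x) \<in> T)"
    using open_whole[OF qo_sub[OF q]] qo_sub[OF q] by (auto simp: symX_def)
  then show ?thesis using sum_single[OF f False, of "phi A T :: 'a set list \<Rightarrow> 'k"] phi_char[OF q, of "[A]"]
    is_comp_single[OF False] by (simp add: eps'_top_def)
qed

lemma phi_tb: "tb_morphism_eps (phi :: 'a set \<Rightarrow> ('a \<times> 'a) set \<Rightarrow> 'a set list \<Rightarrow> 'k::field)"
  unfolding tb_morphism_eps_def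
proof (intro conjI allI impI)
  fix A :: "'a set" and T :: "('a \<times> 'a) set" and c assume a: "finite A \<and> quasi_order A T \<and> \<not> is_comp A c"
  then show "(phi A T c :: 'k) = 0" using phi_char[of A T c] by simp
next
  fix \<sigma> :: "'a \<Rightarrow> 'a" and A :: "'a set" and T :: "('a \<times> 'a) set" and c assume "finite A \<and> quasi_order A T \<and> inj_on \<sigma> A \<and> is_comp A c"
  then show "(phi (\<sigma> ` A) ((\<lambda>(x, y). (\<sigma> x, \<sigma> y)) ` T) (map ((`) \<sigma>) c) :: 'k) = phi A T c"
    using phi_species by blast
next
  have q: "quasi_order {} ({} :: ('a \<times> 'a) set)" by (simp add: quasi_order_def)
  show "(phi {} {} :: 'a set list \<Rightarrow> 'k) = (\<lambda>c. if c = [] then 1 else 0)"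
    unfolding phi_char[OF q] by (auto simp: is_comp_empty)
next
  fix A B :: "'a set" and T T' :: "('a \<times> 'a) set" assume "finite A \<and> finite B \<and> A \<inter> B = {} \<and> quasi_order A T \<and> quasi_order B T'"
  then show "(phi (A \<union> B) (T \<union> T') :: 'a set list \<Rightarrow> 'k) = qsh A B (phi A T) (phi B T')"
    using phi_prod by blast
next
  fix A B :: "'a set" and T :: "('a \<times> 'a) set" and c1 c2 assume "finite A \<and> finite B \<and> A \<inter> B = {} \<and> quasi_order (A \<union> B) T \<and> is_comp A c1 \<and> is_comp B c2"
  then show "(phi (A \<union> B) T (c1 @ c2) :: 'k) =
       (if open_qo T B then phi A (restr_qo T A) c1 * phi B (restr_qo T B) c2 else 0)"
    using phi_coprod by blast
next
  fix A :: "'a set" and T :: "('a \<times> 'a) set" assume "finite A \<and> quasi_order A T"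
  then show "(\<Sum>c\<in>{c. is_comp A c}. (phi A T c :: 'k) * eps'_comp c) = eps'_top T"
    using phi_eps by blast
qed

lemma tb_single: assumes tb: "tb_morphism_eps \<psi>" and f: "finite X" and ne: "X \<noteq> {}" and q: "quasi_order X T"
  shows "\<psi> X T [X] = eps'_top T"
proof -
  have "(\<Sum>c\<in>{c. is_comp X c}. \<psi> X T c * eps'_comp c) = eps'_top T"
    using tb f q unfolding tb_morphism_eps_def by blast
  then show ?thesis using sum_single[OF f ne, of "\<psi> X T"] by simp
qed

lemma tb_empty: assumes tb: "tb_morphism_eps \<psi>" and q: "quasi_order {} T"
  shows "\<psi> {} T [] = eps'_top T"
proof -
  have "(\<Sum>c\<in>{c. is_comp {} c}. \<psi> {} T c * eps'_comp c) = eps'_top T"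
    using tb q unfolding tb_morphism_eps_def by blast
  then show ?thesis using sum_empty[of "\<psi> {} T"] by simp
qed

lemma tb_unique: assumes tb1: "tb_morphism_eps \<psi>1" and tb2: "tb_morphism_eps \<psi>2"
  shows "finite A \<Longrightarrow> quasi_order A T \<Longrightarrow> \<psi>1 A T c = \<psi>2 A T c"
proof (induction c arbitrary: A T)
  case Nil
  show ?case
  proof (cases "A = {}")
    case True
    then show ?thesis using tb_empty[OF tb1] tb_empty[OF tb2] Nil.prems by simp
  next
    case False
    then have "\<not> is_comp A []" by simp
    then show ?thesis using tb1 tb2 Nil.prems unfolding tb_morphism_eps_def by metis
  qed
next
  case (Cons X cs)
  show ?case
  proof (cases "is_comp A (X # cs)")
    case False
    then show ?thesis using tb1 tb2 Cons.prems unfolding tb_morphism_eps_def by metis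
  next
    case True
    let ?B = "\<Union>(set cs)"
    have h: "X \<noteq> {}" "X \<inter> ?B = {}" "A = X \<union> ?B" "is_comp ?B cs" using True by (auto simp: is_comp_Cons)
    have fX: "finite X" and fB: "finite ?B" using Cons.prems(1) h(3) by auto
    have q: "quasi_order (X \<union> ?B) T" using Cons.prems(2) h(3) by simp
    have qX: "quasi_order X (restr_qo T X)" and qB: "quasi_order ?B (restr_qo T ?B)"
      using qo_restr[OF q] by auto
    have cX: "is_comp X [X]" using is_comp_single[OF h(1)] .
    have cop: "\<psi> (X \<union> ?B) T ([X] @ cs) =
          (if open_qo T ?B then \<psi> X (restr_qo T X) [X] * \<psi> ?B (restr_qo T ?B) cs else 0)"
      if tb: "tb_morphism_eps \<psi>" for \<psi> :: "'a set \<Rightarrow> ('a \<times> 'a) set \<Rightarrow> 'a set list \<Rightarrow> 'b::field"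
    proof -
      have "\<forall>A B T c1 c2. finite A \<and> finite B \<and> A \<inter> B = {} \<and> quasi_order (A \<union> B) T \<and>
        is_comp A c1 \<and> is_comp B c2 \<longrightarrow>
        \<psi> (A \<union> B) T (c1 @ c2) =
          (if open_qo T B then \<psi> A (restr_qo T A) c1 * \<psi> B (restr_qo T B) c2 else 0)"
        using tb unfolding tb_morphism_eps_def by blast
      then show ?thesis using fX fB h(2) q cX h(4) by blast
    qed
    have IH: "\<psi>1 ?B (restr_qo T ?B) cs = \<psi>2 ?B (restr_qo T ?B) cs" using Cons.IH[OF fB qB] .
    show ?thesis using cop[OF tb1] cop[OF tb2] IH tb_single[OF tb1 fX h(1) qX] tb_single[OF tb2 fX h(1) qX] h(3)
      by simp
  qed
qed

theorem theorem41:
  shows "tb_morphism_eps (phi :: 'a set \<Rightarrow> ('a \<times> 'a) set \<Rightarrow> 'a set list \<Rightarrow> 'k::field) \<and>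
    (\<forall>\<psi> :: 'a set \<Rightarrow> ('a \<times> 'a) set \<Rightarrow> 'a set list \<Rightarrow> 'k. tb_morphism_eps \<psi> \<longrightarrow>
       (\<forall>A T c. finite A \<and> quasi_order A T \<longrightarrow> \<psi> A T c = phi A T c))"
  using phi_tb tb_unique[OF _ phi_tb] by blast

end
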